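(* Let $\mathscr C$ be the small category defined below. Let $\Omega_1,\Omega_2,\Omega$ be objects of $\mathscr C$ with $\Omega_j\neq\emptyset$, and let $\phi_j:\Omega_j\to\Omega$ ($j=1,2$) be morphisms given by integers $n_j\in\mathrm{Hom}_{\mathscr C}(\Omega_j,\Omega)$. Let $n=\mathrm{lcm}(n_1,n_2)$, write $n=a_jn_j$ with $a_j\in\mathbb{N}^{\times}$, and let $\Omega':=\{\lambda\in[0,\infty)\mid a_j\lambda\in\Omega_j,\ j=1,2\}$. Then $\Omega'$ is an object of $\mathscr C$; if $\Omega'\neq\emptyset$ one has $a_j\in\mathrm{Hom}_{\mathscr C}(\Omega',\Omega_j)$ and $(\Omega',a_1,a_2)$ is the pullback (fibered product) of $\phi_1,\phi_2$ in $\mathscr C$; if $\Omega'=\emptyset$ the pullback of $\phi_1,\phi_2$ is the initial object $\emptyset$ of $\mathscr C$.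
   Context: $\mathbb{N}^{\times}$ denotes the multiplicative monoid of positive integers. The category $\mathscr C$ has as objects the (possibly empty) bounded open subintervals $\Omega$ of the half-line $[0,\infty)$ (with its usual topology, so intervals of the form $[0,a)$, $a>0$, are included). For $\Omega\neq\emptyset$, $\mathrm{Hom}_{\mathscr C}(\Omega,\Omega')=\{n\in\mathbb{N}^{\times}\mid n\Omega\subset\Omega'\}$, and $\mathrm{Hom}_{\mathscr C}(\emptyset,\Omega')$ is a one-point set for every $\Omega'$; composition is multiplication of integers. Thus $\emptyset$ is the initial object. *)

theory Defs
  imports "HOL-Analysis.Analysis"
begin

definition C_obj :: "real set \<Rightarrow> bool" where
  "C_obj \<Omega> \<longleftrightarrow> openin (top_of_set {0..}) \<Omega> \<and> bounded \<Omega> \<and> is_interval \<Omega>"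

text \<open>Morphisms are encoded as natural numbers, composition is multiplication.
  The unique morphism out of the empty object is encoded by 0 (so that composition
  by multiplication stays correct: g * 0 = 0).\<close>
definition C_hom :: "real set \<Rightarrow> real set \<Rightarrow> nat set" where
  "C_hom \<Omega> \<Omega>' = (if \<Omega> = {} then {0}
      else {n. n > 0 \<and> (\<lambda>x. real n * x) ` \<Omega> \<subseteq> \<Omega>'})"

definition C_pullback ::
  "real set \<Rightarrow> real set \<Rightarrow> real set \<Rightarrow> nat \<Rightarrow> nat \<Rightarrow> real set \<Rightarrow> nat \<Rightarrow> nat \<Rightarrow> bool" where
  "C_pullback X1 X2 X f1 f2 P p1 p2 \<longleftrightarrow>
     C_obj P \<and> p1 \<in> C_hom P X1 \<and> p2 \<in> C_hom P X2 \<and> f1 * p1 = f2 * p2 \<and>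
     (\<forall>Q q1 q2. C_obj Q \<and> q1 \<in> C_hom Q X1 \<and> q2 \<in> C_hom Q X2 \<and> f1 * q1 = f2 * q2 \<longrightarrow>
        (\<exists>!u. u \<in> C_hom Q P \<and> p1 * u = q1 \<and> p2 * u = q2))"

end

theory Submission
  imports Defs
begin

lemma obj_nonneg: "C_obj Q \<Longrightarrow> x \<in> Q \<Longrightarrow> 0 \<le> x"
  unfolding C_obj_def using openin_imp_subset by fastforce

theorem lemma2p4:
  fixes \<Omega>1 \<Omega>2 \<Omega> :: "real set" and n1 n2 :: nat
  assumes "C_obj \<Omega>1" "C_obj \<Omega>2" "C_obj \<Omega>"
    and "\<Omega>1 \<noteq> {}" "\<Omega>2 \<noteq> {}"
    and "n1 \<in> C_hom \<Omega>1 \<Omega>" "n2 \<in> C_hom \<Omega>2 \<Omega>"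
  defines "a1 \<equiv> lcm n1 n2 div n1" and "a2 \<equiv> lcm n1 n2 div n2"
    and "\<Omega>' \<equiv> {t::real. 0 \<le> t \<and> real (lcm n1 n2 div n1) * t \<in> \<Omega>1 \<and> real (lcm n1 n2 div n2) * t \<in> \<Omega>2}"
  shows "C_obj \<Omega>' \<and>
    (\<Omega>' \<noteq> {} \<longrightarrow> a1 \<in> C_hom \<Omega>' \<Omega>1 \<and> a2 \<in> C_hom \<Omega>' \<Omega>2 \<and>
        C_pullback \<Omega>1 \<Omega>2 \<Omega> n1 n2 \<Omega>' a1 a2) \<and>
    (\<Omega>' = {} \<longrightarrow> (\<exists>p1 p2. C_pullback \<Omega>1 \<Omega>2 \<Omega> n1 n2 {} p1 p2))"
proof -
  have n1p: "n1 > 0" and n2p: "n2 > 0" using assms(4-7) by (auto simp: C_hom_def)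
  have l1: "n1 * a1 = lcm n1 n2" unfolding a1_def by (simp add: dvd_mult_div_cancel)
  have l2: "n2 * a2 = lcm n1 n2" unfolding a2_def by (simp add: dvd_mult_div_cancel)
  have lp: "lcm n1 n2 > 0" using n1p n2p by (simp add: lcm_pos_nat)
  have a1p: "a1 > 0" using l1 lp by (cases "a1 = 0") auto
  have a2p: "a2 > 0" using l2 lp by (cases "a2 = 0") auto
  have O'def: "\<Omega>' = {t. 0 \<le> t \<and> real a1 * t \<in> \<Omega>1 \<and> real a2 * t \<in> \<Omega>2}"
    unfolding \<Omega>'_def a1_def a2_def by simp
  have objO: "C_obj \<Omega>'"
  proof -
    have op: "openin (top_of_set {0..}) ({0..} \<inter> (\<lambda>t. real a * t) -` U)"
      if "openin (top_of_set {0..}) U" "a > 0" for a :: nat and U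
    proof -
      have "(\<lambda>t. real a * t) ` {0..} \<subseteq> {0::real..}" by auto
      moreover have "continuous_on {0..} (\<lambda>t. real a * (t::real))"
        by (intro continuous_intros)
      ultimately show ?thesis using continuous_on_open_gen that(1) by blast
    qed
    have eq: "\<Omega>' = ({0..} \<inter> (\<lambda>t. real a1 * t) -` \<Omega>1) \<inter> ({0..} \<inter> (\<lambda>t. real a2 * t) -` \<Omega>2)"
      unfolding O'def by auto
    have "openin (top_of_set {0..}) \<Omega>'"
      unfolding eq using op[of \<Omega>1 a1] op[of \<Omega>2 a2] assms(1,2) a1p a2p
      by (auto simp: C_obj_def)
    moreover have "bounded \<Omega>'"
    proof -
      obtain B where B: "\<forall>x\<in>\<Omega>1. \<bar>x\<bar> \<le> B" using assms(1) by (auto simp: C_obj_def bounded_real)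
      have "\<forall>t\<in>\<Omega>'. \<bar>t\<bar> \<le> B"
      proof
        fix t assume t: "t \<in> \<Omega>'"
        hence "\<bar>real a1 * t\<bar> \<le> B" "0 \<le> t" using B O'def by auto
        moreover have "real a1 \<ge> 1" using a1p by simp
        ultimately show "\<bar>t\<bar> \<le> B"
          by (smt (verit) abs_of_nonneg mult_le_cancel_right1 zero_le_mult_iff)
      qed
      thus ?thesis by (auto simp: bounded_real)
    qed
    moreover have "is_interval \<Omega>'"
      unfolding is_interval_1
    proof (intro ballI allI impI)
      fix a b x assume a: "a \<in> \<Omega>'" and b: "b \<in> \<Omega>'" and axb: "a \<le> x \<and> x \<le> b"
      have ax: "a \<le> x" and xb: "x \<le> b" using axb by auto
      have i1: "is_interval \<Omega>1" "is_interval \<Omega>2" using assms(1,2) by (auto simp: C_obj_def)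
      have "real a1 * a \<le> real a1 * x" "real a1 * x \<le> real a1 * b"
        using ax xb by (simp_all add: mult_left_mono)
      hence x1: "real a1 * x \<in> \<Omega>1"
        using i1(1)[unfolded is_interval_1] a b O'def by blast
      have "real a2 * a \<le> real a2 * x" "real a2 * x \<le> real a2 * b"
        using ax xb by (simp_all add: mult_left_mono)
      hence x2: "real a2 * x \<in> \<Omega>2"
        using i1(2)[unfolded is_interval_1] a b O'def by blast
      have "0 \<le> x" using a ax O'def by auto
      thus "x \<in> \<Omega>'" using x1 x2 O'def by auto
    qed
    ultimately show ?thesis by (simp add: C_obj_def)
  qed
  have fac: "\<exists>u>0. real a1 * real u = real q1 \<and> real a2 * real u = real q2 \<and> a1 * u = q1 \<and> a2 * u = q2
               \<and> (\<lambda>x. real u * x) ` Q \<subseteq> \<Omega>'"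
    if Q: "C_obj Q" "Q \<noteq> {}" "q1 \<in> C_hom Q \<Omega>1" "q2 \<in> C_hom Q \<Omega>2" "n1 * q1 = n2 * q2"
    for Q q1 q2
  proof -
    have q1p: "q1 > 0" and q1h: "(\<lambda>x. real q1 * x) ` Q \<subseteq> \<Omega>1" using Q by (auto simp: C_hom_def)
    have q2p: "q2 > 0" and q2h: "(\<lambda>x. real q2 * x) ` Q \<subseteq> \<Omega>2" using Q by (auto simp: C_hom_def)
    have "lcm n1 n2 dvd n1 * q1"
    proof (rule lcm_least)
      show "n2 dvd n1 * q1" unfolding Q(5) by simp
    qed simp
    then obtain u where u: "n1 * q1 = lcm n1 n2 * u" by blast
    have e1: "a1 * u = q1" using u l1 n1p by (metis mult.assoc mult_left_cancel not_less0 zero_less_iff_neq_zero)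
    have e2: "a2 * u = q2" using u l2 n2p Q(5) by (metis mult.assoc mult_left_cancel not_less0 zero_less_iff_neq_zero)
    have up: "u > 0" using e1 q1p by (cases "u = 0") auto
    have r1: "real a1 * real u = real q1" using e1 by (metis of_nat_mult)
    have r2: "real a2 * real u = real q2" using e2 by (metis of_nat_mult)
    have "(\<lambda>x. real u * x) ` Q \<subseteq> \<Omega>'"
    proof
      fix y assume "y \<in> (\<lambda>x. real u * x) ` Q"
      then obtain x where x: "x \<in> Q" "y = real u * x" by auto
      have "0 \<le> x" using obj_nonneg Q(1) x(1) by blast
      moreover have "real a1 * y = real q1 * x" "real a2 * y = real q2 * x"
        using x(2) r1 r2 by (simp_all add: mult.assoc[symmetric])
      moreover have "real q1 * x \<in> \<Omega>1" "real q2 * x \<in> \<Omega>2" using q1h q2h x(1) by auto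
      moreover have "0 \<le> y" using x(2) \<open>0 \<le> x\<close> by simp
      ultimately show "y \<in> \<Omega>'" unfolding O'def by auto
    qed
    thus ?thesis using up r1 r2 e1 e2 by blast
  qed
  have empty_hom: "C_hom {} X = {0}" for X by (simp add: C_hom_def)
  have part2: "\<Omega>' \<noteq> {} \<longrightarrow> a1 \<in> C_hom \<Omega>' \<Omega>1 \<and> a2 \<in> C_hom \<Omega>' \<Omega>2 \<and>
        C_pullback \<Omega>1 \<Omega>2 \<Omega> n1 n2 \<Omega>' a1 a2"
  proof
    assume ne: "\<Omega>' \<noteq> {}"
    have h1: "a1 \<in> C_hom \<Omega>' \<Omega>1" "a2 \<in> C_hom \<Omega>' \<Omega>2"
      using ne a1p a2p by (auto simp: C_hom_def O'def)
    have "C_pullback \<Omega>1 \<Omega>2 \<Omega> n1 n2 \<Omega>' a1 a2"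
      unfolding C_pullback_def
    proof (intro conjI allI impI objO h1)
      show "n1 * a1 = n2 * a2" using l1 l2 by simp
      fix Q q1 q2
      assume H: "C_obj Q \<and> q1 \<in> C_hom Q \<Omega>1 \<and> q2 \<in> C_hom Q \<Omega>2 \<and> n1 * q1 = n2 * q2"
      show "\<exists>!u. u \<in> C_hom Q \<Omega>' \<and> a1 * u = q1 \<and> a2 * u = q2"
      proof (cases "Q = {}")
        case True
        then show ?thesis using H by (auto simp: C_hom_def)
      next
        case False
        then obtain u where u: "u > 0" "a1 * u = q1" "a2 * u = q2" "(\<lambda>x. real u * x) ` Q \<subseteq> \<Omega>'"
          using fac[of Q q1 q2] H by blast
        show ?thesis
        proof (rule ex1I[of _ u])
          show "u \<in> C_hom Q \<Omega>' \<and> a1 * u = q1 \<and> a2 * u = q2" using u False by (auto simp: C_hom_def)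
          fix v assume "v \<in> C_hom Q \<Omega>' \<and> a1 * v = q1 \<and> a2 * v = q2"
          thus "v = u" using u a1p by auto
        qed
      qed
    qed
    thus "a1 \<in> C_hom \<Omega>' \<Omega>1 \<and> a2 \<in> C_hom \<Omega>' \<Omega>2 \<and> C_pullback \<Omega>1 \<Omega>2 \<Omega> n1 n2 \<Omega>' a1 a2"
      using h1 by blast
  qed
  have part3: "\<Omega>' = {} \<longrightarrow> (\<exists>p1 p2. C_pullback \<Omega>1 \<Omega>2 \<Omega> n1 n2 {} p1 p2)"
  proof
    assume em: "\<Omega>' = {}"
    have "C_pullback \<Omega>1 \<Omega>2 \<Omega> n1 n2 {} 0 0"
      unfolding C_pullback_def
    proof (intro conjI allI impI)
      show "C_obj {}" by (simp add: C_obj_def)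
      show "0 \<in> C_hom {} \<Omega>1" "0 \<in> C_hom {} \<Omega>2" by (simp_all add: C_hom_def)
      show "n1 * 0 = n2 * 0" by simp
      fix Q q1 q2
      assume H: "C_obj Q \<and> q1 \<in> C_hom Q \<Omega>1 \<and> q2 \<in> C_hom Q \<Omega>2 \<and> n1 * q1 = n2 * q2"
      show "\<exists>!u. u \<in> C_hom Q {} \<and> 0 * u = q1 \<and> 0 * u = q2"
      proof (cases "Q = {}")
        case True
        then show ?thesis using H by (auto simp: C_hom_def)
      next
        case False
        then obtain u where u: "(\<lambda>x. real u * x) ` Q \<subseteq> \<Omega>'"
          using fac[of Q q1 q2] H by blast
        thus ?thesis using em False by auto
      qed
    qed
    thus "\<exists>p1 p2. C_pullback \<Omega>1 \<Omega>2 \<Omega> n1 n2 {} p1 p2" by blast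
  qed
  show ?thesis using objO part2 part3 by blast
qed

end
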